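(* Let $C_1, \ldots, C_m$ be the strongly connected components of the regulation graph $(A, \mathrm{reg})$, listed in a topological ordering of its strongly-connected-component quotient graph (i.e. whenever some agent of $C_i$ regulates some agent of $C_j$ with $i \neq j$, then $i < j$). Then $(C_1, \ldots, C_m)$ is a modular organisation.
   Context: Let $A$ be a finite set of agents. For each $a \in A$ let $S_a$ be a nonempty finite set, and let $S = \prod_{a \in A} S_a$ be the set of states; for $s \in S$ and $X \subseteq A$, $s|_X$ is the restriction of $s$ to $X$ (extended elementwise to sets). For each $a \in A$ let $\to_a \subseteq S \times S$ be a relation that is either empty or left-total, such that whenever $s \to_a s'$, either $s = s'$ or $s$ and $s'$ differ only in the $a$-component. For $X \subseteq A$ let $\to_X = \bigcup_{a \in X} \to_a$ (so $\to_\emptyset$ is empty) and $\to_X^*$ its reflexive-transitive closure; for $T \subseteq S$, $(T \to_X) = \{ t' : \exists t \in T,\ t \to_X t'\}$. Orbit operator: $\Omega_X(S') = \{ s' : \exists s \in S',\ s \to_X^* s'\}$. Equilibria operator: $\Psi_X(S') = \{ s \in \Omega_X(S') : \forall s' \in S,\ s \to_X^* s' \implies s' \to_X^* s \}$. $M$-relation: for $X, Y \subseteq A$, $X \leadsto Y$ iff for every $S' \subseteq S$, with $T = \Psi_X(\Psi_{X \cup Y}(S'))$, one has $(T \to_Y) \subseteq T$. Regulation: $a_k$ regulates $a_\ell$ (written $a_k \,\mathrm{reg}\, a_\ell$) iff there exist $s, s' \in S$ with $s|_{A \setminus \{a_k\}} = s'|_{A \setminus \{a_k\}}$ and $(\{s\}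 \to_{a_\ell})|_{\{a_\ell\}} \neq (\{s'\} \to_{a_\ell})|_{\{a_\ell\}}$; the regulation graph is the directed graph $(A, \mathrm{reg})$. A modular organisation is an ordered partition $(X_1, \ldots, X_m)$ of $A$ (a sequence of nonempty pairwise disjoint subsets with union $A$) such that for all $1 \le i \le m$, $\left(\bigcup_{j=1}^{i-1} X_j\right) \leadsto X_i$. *)

theory Defs
  imports Main "HOL-Library.FuncSet"
begin

text \<open>Agents have type 'a, local state values type 'v. A state is an element of
  the extensional product PiE A Sa. Trans a is the relation ->_a.\<close>

definition states :: "'a set \<Rightarrow> ('a \<Rightarrow> 'v set) \<Rightarrow> ('a \<Rightarrow> 'v) set" where
  "states A Sa = PiE A Sa"

definition network :: "'a set \<Rightarrow> ('a \<Rightarrow> 'v set) \<Rightarrow> ('a \<Rightarrow> ('a \<Rightarrow> 'v) rel) \<Rightarrow> bool" where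
  "network A Sa Trans \<longleftrightarrow>
     finite A \<and>
     (\<forall>a\<in>A. finite (Sa a) \<and> Sa a \<noteq> {}) \<and>
     (\<forall>a. Trans a \<subseteq> states A Sa \<times> states A Sa) \<and>
     (\<forall>a. a \<notin> A \<longrightarrow> Trans a = {}) \<and>
     (\<forall>a\<in>A. Trans a = {} \<or> (\<forall>s\<in>states A Sa. \<exists>s'. (s, s') \<in> Trans a)) \<and>
     (\<forall>a\<in>A. \<forall>s s'. (s, s') \<in> Trans a \<longrightarrow>
         s = s' \<or> (\<forall>b\<in>A. b \<noteq> a \<longrightarrow> s b = s' b))"

definition step :: "('a \<Rightarrow> ('a \<Rightarrow> 'v) rel) \<Rightarrow> 'a set \<Rightarrow> ('a \<Rightarrow> 'v) rel" where
  "step Trans X = (\<Union>a\<in>X. Trans a)"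

definition orbit :: "('a \<Rightarrow> ('a \<Rightarrow> 'v) rel) \<Rightarrow> 'a set \<Rightarrow> ('a \<Rightarrow> 'v) set \<Rightarrow> ('a \<Rightarrow> 'v) set" where
  "orbit Trans X S' = (step Trans X)\<^sup>* `` S'"

definition equilibria :: "'a set \<Rightarrow> ('a \<Rightarrow> 'v set) \<Rightarrow> ('a \<Rightarrow> ('a \<Rightarrow> 'v) rel) \<Rightarrow> 'a set
    \<Rightarrow> ('a \<Rightarrow> 'v) set \<Rightarrow> ('a \<Rightarrow> 'v) set" where
  "equilibria A Sa Trans X S' =
     {s \<in> orbit Trans X S'. \<forall>s'\<in>states A Sa.
        (s, s') \<in> (step Trans X)\<^sup>* \<longrightarrow> (s', s) \<in> (step Trans X)\<^sup>*}"

definition leadsto :: "'a set \<Rightarrow> ('a \<Rightarrow> 'v set) \<Rightarrow> ('a \<Rightarrow> ('a \<Rightarrow> 'v) rel) \<Rightarrow> 'a set \<Rightarrow> 'a set \<Rightarrow> bool" where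
  "leadsto A Sa Trans X Y \<longleftrightarrow>
     (\<forall>S' \<subseteq> states A Sa.
        let T = equilibria A Sa Trans X (equilibria A Sa Trans (X \<union> Y) S')
        in step Trans Y `` T \<subseteq> T)"

definition regulates :: "'a set \<Rightarrow> ('a \<Rightarrow> 'v set) \<Rightarrow> ('a \<Rightarrow> ('a \<Rightarrow> 'v) rel) \<Rightarrow> 'a \<Rightarrow> 'a \<Rightarrow> bool" where
  "regulates A Sa Trans k l \<longleftrightarrow>
     (\<exists>s\<in>states A Sa. \<exists>s'\<in>states A Sa.
        (\<forall>b\<in>A - {k}. s b = s' b) \<and>
        (\<lambda>t. t l) ` (Trans l `` {s}) \<noteq> (\<lambda>t. t l) ` (Trans l `` {s'}))"

definition reg_graph :: "'a set \<Rightarrow> ('a \<Rightarrow> 'v set) \<Rightarrow> ('a \<Rightarrow> ('a \<Rightarrow> 'v) rel) \<Rightarrow> 'a rel" where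
  "reg_graph A Sa Trans = {(k, l). k \<in> A \<and> l \<in> A \<and> regulates A Sa Trans k l}"

definition sccs :: "'a set \<Rightarrow> 'a rel \<Rightarrow> 'a set set" where
  "sccs V E = (\<lambda>a. {b \<in> V. (a, b) \<in> E\<^sup>* \<and> (b, a) \<in> E\<^sup>*}) ` V"

definition modular_organisation :: "'a set \<Rightarrow> ('a \<Rightarrow> 'v set) \<Rightarrow> ('a \<Rightarrow> ('a \<Rightarrow> 'v) rel)
    \<Rightarrow> 'a set list \<Rightarrow> bool" where
  "modular_organisation A Sa Trans Xs \<longleftrightarrow>
     (\<forall>i < length Xs. Xs ! i \<noteq> {}) \<and>
     (\<forall>i < length Xs. \<forall>j < length Xs. i \<noteq> j \<longrightarrow> Xs ! i \<inter> Xs ! j = {}) \<and>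
     \<Union>(set Xs) = A \<and>
     (\<forall>i < length Xs. leadsto A Sa Trans (\<Union>j<i. Xs ! j) (Xs ! i))"

end

theory Submission
  imports Defs
begin

definition shift :: "'a \<Rightarrow> ('a \<Rightarrow> 'v) \<Rightarrow> ('a \<Rightarrow> 'v) \<Rightarrow> ('a \<Rightarrow> 'v)" where
  "shift y w v = (\<lambda>b. if b = y then w y else v b)"

lemma net_facts:
  assumes "network A Sa Trans"
  shows net_sub: "\<And>a. Trans a \<subseteq> states A Sa \<times> states A Sa"
    and net_out: "\<And>a. a \<notin> A \<Longrightarrow> Trans a = {}"
    and net_loc: "\<And>a s s' b. a \<in> A \<Longrightarrow> (s, s') \<in> Trans a \<Longrightarrow> b \<in> A \<Longrightarrow> b \<noteq> a \<Longrightarrow> s b = s' b"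
  using assms unfolding network_def by blast+

lemma states_ext:
  assumes "u \<in> states A Sa" "w \<in> states A Sa" "\<forall>b\<in>A. u b = w b"
  shows "u = w"
  using assms unfolding states_def by (metis PiE_ext)

lemma shift_states:
  assumes "v \<in> states A Sa" "w \<in> states A Sa" "y \<in> A"
  shows "shift y w v \<in> states A Sa"
  using assms unfolding states_def shift_def PiE_def Pi_def extensional_def by auto

lemma one_step:
  assumes net: "network A Sa Trans"
    and tr: "(u, u') \<in> Trans x" and xA: "x \<in> A" and yA: "y \<in> A" and xy: "x \<noteq> y"
    and nreg: "\<not> regulates A Sa Trans y x"
    and us: "u \<in> states A Sa" and ws: "w \<in> states A Sa"
    and agr: "\<forall>b\<in>A - {y}. u b = w b"
  shows "(w, shift y w u') \<in> Trans x"
proof -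
  have img: "(\<lambda>t. t x) ` (Trans x `` {u}) = (\<lambda>t. t x) ` (Trans x `` {w})"
    using nreg us ws agr unfolding regulates_def by blast
  have "u' x \<in> (\<lambda>t. t x) ` (Trans x `` {u})" using tr by blast
  then obtain t where t: "(w, t) \<in> Trans x" "t x = u' x" using img by auto
  note sub = net_sub[OF net]
  have ts: "t \<in> states A Sa" using t sub by blast
  have u's: "u' \<in> states A Sa" using tr sub by blast
  have wt: "\<forall>b\<in>A. b \<noteq> x \<longrightarrow> w b = t b"
    using net_loc[OF net xA t(1)] by blast
  have uu': "\<forall>b\<in>A. b \<noteq> x \<longrightarrow> u b = u' b"
    using net_loc[OF net xA tr] by blast
  have "t = shift y w u'"
  proof (rule states_ext[OF ts shift_states[OF u's ws yA]])
    show "\<forall>b\<in>A. t b = shift y w u' b"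
    proof
      fix b assume bA: "b \<in> A"
      show "t b = shift y w u' b"
      proof (cases "b = x")
        case True then show ?thesis using t(2) xy unfolding shift_def by simp
      next
        case False
        then show ?thesis using wt uu' agr bA xy unfolding shift_def by auto
      qed
    qed
  qed
  then show ?thesis using t by simp
qed

lemma step_states:
  assumes net: "network A Sa Trans" and "(u, v) \<in> step Trans X"
  shows "u \<in> states A Sa" "v \<in> states A Sa"
  using assms(2) net_sub[OF net] unfolding step_def by blast+

lemma reach_states:
  assumes net: "network A Sa Trans" and "(u, v) \<in> (step Trans X)\<^sup>*" "u \<in> states A Sa"
  shows "v \<in> states A Sa"
  using assms(2,3) by induction (auto dest: step_states[OF net])

lemma bisim:
  assumes net: "network A Sa Trans"
    and XA: "X \<subseteq> A" and yA: "y \<in> A" and yX: "y \<notin> X"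
    and nreg: "\<forall>x\<in>X. \<not> regulates A Sa Trans y x"
    and reach: "(u, v) \<in> (step Trans X)\<^sup>*"
    and us: "u \<in> states A Sa" and ws: "w \<in> states A Sa"
    and agr: "\<forall>b\<in>A - {y}. u b = w b"
  shows "(w, shift y w v) \<in> (step Trans X)\<^sup>*"
  using reach
proof induction
  case base
  have "shift y w u = w"
    apply (rule states_ext[OF shift_states[OF us ws yA] ws])
    using agr unfolding shift_def by auto
  then show ?case by simp
next
  case (step v v')
  then obtain x where x: "x \<in> X" "(v, v') \<in> Trans x" unfolding step_def by blast
  have vs: "v \<in> states A Sa" using reach_states[OF net step(1) us] .
  have "(shift y w v, shift y (shift y w v) v') \<in> Trans x"
    apply (rule one_step[OF net x(2)])
    using x XA yA yX nreg vs shift_states[OF vs ws yA] by (auto simp: shift_def)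
  moreover have "shift y (shift y w v) v' = shift y w v'" unfolding shift_def by auto
  ultimately have "(shift y w v, shift y w v') \<in> step Trans X" using x unfolding step_def by auto
  then show ?case using step(3) by simp
qed

lemma reach_keep:
  assumes net: "network A Sa Trans" and yA: "y \<in> A" and yX: "y \<notin> X"
    and reach: "(u, v) \<in> (step Trans X)\<^sup>*"
  shows "v y = u y"
  using reach
proof induction
  case base then show ?case by simp
next
  case (step v v')
  then obtain x where x: "x \<in> X" "(v, v') \<in> Trans x" unfolding step_def by blast
  have xA: "x \<in> A" using net_out[OF net, of x] x by blast
  have "v y = v' y" using net_loc[OF net xA x(2) yA] yX x(1) by blast
  then show ?case using step(3) by simp
qed

lemma step_mono: "X \<subseteq> Z \<Longrightarrow> step Trans X \<subseteq> step Trans Z"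
  unfolding step_def by blast

lemma key_leadsto:
  assumes net: "network A Sa Trans"
    and XA: "X \<subseteq> A" and disj: "X \<inter> Y = {}"
    and nreg: "\<forall>x\<in>X. \<forall>y\<in>Y. \<not> regulates A Sa Trans y x"
  shows "leadsto A Sa Trans X Y"
  unfolding leadsto_def Let_def
proof (intro allI impI subsetI)
  fix S' s' assume S'sub: "S' \<subseteq> states A Sa"
  let ?E = "equilibria A Sa Trans (X \<union> Y) S'"
  let ?T = "equilibria A Sa Trans X ?E"
  let ?R = "step Trans X" and ?Q = "step Trans (X \<union> Y)"
  assume "s' \<in> step Trans Y `` ?T"
  then obtain s y where sT: "s \<in> ?T" and yY: "y \<in> Y" and ss': "(s, s') \<in> Trans y"
    unfolding step_def by blast
  have yA: "y \<in> A" using net_out[OF net, of y] ss' by blast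
  have yX: "y \<notin> X" using disj yY by blast
  have ss: "s \<in> states A Sa" and s's: "s' \<in> states A Sa" using net_sub[OF net] ss' by blast+
  have agr: "\<forall>b\<in>A - {y}. s' b = s b"
    using net_loc[OF net yA ss'] by auto
  have RQ: "?R \<subseteq> ?Q" by (rule step_mono) blast
  have s'Q: "(s, s') \<in> ?Q" using ss' yY unfolding step_def by blast
  from sT obtain e where eE: "e \<in> ?E" and es: "(e, s) \<in> ?R\<^sup>*"
    unfolding equilibria_def orbit_def by blast
  have es': "(e, s') \<in> ?Q\<^sup>*"
    using rtrancl_mono[OF RQ] es s'Q by (meson rtrancl.rtrancl_into_rtrancl subsetD)
  from eE obtain p where p: "p \<in> S'" "(p, e) \<in> ?Q\<^sup>*" and erec: "\<forall>w\<in>states A Sa. (e, w) \<in> ?Q\<^sup>* \<longrightarrow> (w, e) \<in> ?Q\<^sup>*"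
    unfolding equilibria_def orbit_def by blast
  have s'E: "s' \<in> ?E"
    unfolding equilibria_def orbit_def
  proof (intro CollectI conjI ballI impI)
    show "s' \<in> ?Q\<^sup>* `` S'" using p es' by (meson ImageI rtrancl_trans)
    fix w assume "w \<in> states A Sa" "(s', w) \<in> ?Q\<^sup>*"
    then have "(w, e) \<in> ?Q\<^sup>*" using erec es' by (meson rtrancl_trans)
    then show "(w, s') \<in> ?Q\<^sup>*" using es' by (meson rtrancl_trans)
  qed
  have srec: "\<forall>w\<in>states A Sa. (s, w) \<in> ?R\<^sup>* \<longrightarrow> (w, s) \<in> ?R\<^sup>*"
    using sT unfolding equilibria_def by blast
  have nreg': "\<forall>x\<in>X. \<not> regulates A Sa Trans y x" using nreg yY by blast
  show "s' \<in> ?T"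
    unfolding equilibria_def[where S'="?E" and X=X] orbit_def
  proof (intro CollectI conjI ballI impI)
    show "s' \<in> ?R\<^sup>* `` ?E" using s'E by (meson ImageI rtrancl.rtrancl_refl)
    fix w assume ws: "w \<in> states A Sa" and s'w: "(s', w) \<in> ?R\<^sup>*"
    have 1: "(s, shift y s w) \<in> ?R\<^sup>*"
      by (rule bisim[OF net XA yA yX nreg' s'w s's ss]) (use agr in auto)
    have shs: "shift y s w \<in> states A Sa" using shift_states[OF ws ss yA] .
    have 2: "(shift y s w, s) \<in> ?R\<^sup>*" using srec 1 shs by blast
    have 3: "(w, shift y w s) \<in> ?R\<^sup>*"
      by (rule bisim[OF net XA yA yX nreg' 2 shs ws]) (auto simp: shift_def)
    have wy: "w y = s' y" using reach_keep[OF net yA yX s'w] .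
    have "shift y w s = s'"
      apply (rule states_ext[OF shift_states[OF ss ws yA] s's])
      using agr wy unfolding shift_def by auto
    then show "(w, s') \<in> ?R\<^sup>*" using 3 by simp
  qed
qed

lemma scc_sub: "C \<in> sccs V E \<Longrightarrow> C \<subseteq> V"
  unfolding sccs_def by auto

lemma scc_ne: "C \<in> sccs V E \<Longrightarrow> C \<noteq> {}"
  unfolding sccs_def by auto

lemma scc_cover: "a \<in> V \<Longrightarrow> \<exists>C\<in>sccs V E. a \<in> C"
  unfolding sccs_def by auto

lemma scc_disj: "C \<in> sccs V E \<Longrightarrow> D \<in> sccs V E \<Longrightarrow> C \<noteq> D \<Longrightarrow> C \<inter> D = {}"
proof -
  assume C: "C \<in> sccs V E" and D: "D \<in> sccs V E" and ne: "C \<noteq> D"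
  obtain a where a: "C = {b \<in> V. (a, b) \<in> E\<^sup>* \<and> (b, a) \<in> E\<^sup>*}" using C unfolding sccs_def by auto
  obtain d where d: "D = {b \<in> V. (d, b) \<in> E\<^sup>* \<and> (b, d) \<in> E\<^sup>*}" using D unfolding sccs_def by auto
  show ?thesis
  proof (rule ccontr)
    assume "C \<inter> D \<noteq> {}"
    then obtain c where "c \<in> C" "c \<in> D" by blast
    then have "(a, c) \<in> E\<^sup>*" "(c, a) \<in> E\<^sup>*" "(d, c) \<in> E\<^sup>*" "(c, d) \<in> E\<^sup>*" using a d by auto
    then have "(a, d) \<in> E\<^sup>*" "(d, a) \<in> E\<^sup>*" by (meson rtrancl_trans)+
    then have "C = D" unfolding a d using rtrancl_trans[of _ _ E] by blast
    with ne show False by simp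
  qed
qed

theorem theorem1:
  fixes A :: "'a set" and Sa :: "'a \<Rightarrow> 'v set" and Trans :: "'a \<Rightarrow> ('a \<Rightarrow> 'v) rel"
    and Cs :: "'a set list"
  assumes "network A Sa Trans"
    and "distinct Cs"
    and "set Cs = sccs A (reg_graph A Sa Trans)"
    and "\<forall>i < length Cs. \<forall>j < length Cs. i \<noteq> j \<longrightarrow>
           (\<exists>a\<in>Cs ! i. \<exists>b\<in>Cs ! j. regulates A Sa Trans a b) \<longrightarrow> i < j"
  shows "modular_organisation A Sa Trans Cs"
proof -
  note net = assms(1)
  let ?S = "sccs A (reg_graph A Sa Trans)"
  have mem: "\<And>i. i < length Cs \<Longrightarrow> Cs ! i \<in> ?S" using assms(3) nth_mem by blast
  have disj: "\<And>i j. i < length Cs \<Longrightarrow> j < length Cs \<Longrightarrow> i \<noteq> j \<Longrightarrow> Cs ! i \<inter> Cs ! j = {}"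
  proof -
    fix i j assume ij: "i < length Cs" "j < length Cs" "i \<noteq> j"
    have "Cs ! i \<noteq> Cs ! j" using assms(2) ij nth_eq_iff_index_eq by blast
    then show "Cs ! i \<inter> Cs ! j = {}" using scc_disj mem ij by blast
  qed
  have sub: "\<And>i. i < length Cs \<Longrightarrow> Cs ! i \<subseteq> A" using mem scc_sub by blast
  have union: "\<Union>(set Cs) = A"
  proof
    show "\<Union>(set Cs) \<subseteq> A" using assms(3) scc_sub by blast
    show "A \<subseteq> \<Union>(set Cs)" using assms(3) scc_cover by (metis UnionI subsetI)
  qed
  have lead: "leadsto A Sa Trans (\<Union>j<i. Cs ! j) (Cs ! i)" if i: "i < length Cs" for i
  proof (rule key_leadsto[OF net])
    show "(\<Union>j<i. Cs ! j) \<subseteq> A" using sub i by (meson UN_least less_trans lessThan_iff)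
    show "(\<Union>j<i. Cs ! j) \<inter> Cs ! i = {}" 
    proof -
      { fix j assume "j < i"
        then have "Cs ! j \<inter> Cs ! i = {}" using disj[of j i] i by simp }
      then show ?thesis by blast
    qed
    show "\<forall>x\<in>\<Union>j<i. Cs ! j. \<forall>y\<in>Cs ! i. \<not> regulates A Sa Trans y x"
    proof (intro ballI notI)
      fix x y assume "x \<in> (\<Union>j<i. Cs ! j)" and y: "y \<in> Cs ! i" and r: "regulates A Sa Trans y x"
      then obtain j where j: "j < i" "x \<in> Cs ! j" by blast
      have jl: "j < length Cs" using j i by simp
      have "i \<noteq> j" using j by simp
      then have "i < j" using assms(4) i jl j(2) y r by blast
      with j show False by simp
    qed
  qed
  show ?thesis unfolding modular_organisation_def
  proof (intro conjI allI impI)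
    fix i assume "i < length Cs" then show "Cs ! i \<noteq> {}" using mem scc_ne by blast
  next
    fix i j assume "i < length Cs" "j < length Cs" "i \<noteq> j"
    then show "Cs ! i \<inter> Cs ! j = {}" using disj by blast
  next
    show "\<Union>(set Cs) = A" by (rule union)
  next
    fix i assume "i < length Cs" then show "leadsto A Sa Trans (\<Union>j<i. Cs ! j) (Cs ! i)" by (rule lead)
  qed
qed

end
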